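(* Fix $\alpha\in[0,1)$ and $p>1$, let $K_2=\int_0^1(e^{-x^p}-e^{-x})x^{-\alpha-1}\,dx$, $f_2(x)=\frac1{K_2}(e^{-x^p}-e^{-x})x^{-\alpha-1}1_{[0<x<1]}$, and $\varphi(z)=\frac{e^{-z^p}-e^{-z}}{z-z^p}$ for $z\in(0,1)$. Consider the following procedure (Algorithm 2): independently simulate $U\sim U(0,1)$ and $Y\sim\mathrm{beta}\left(\frac{1-\alpha}{p-1},2\right)$, and set $Z=Y^{1/(p-1)}$; if $U\le\varphi(Z)$ return $Z$, otherwise repeat with fresh independent variables. Then: (a) $Z$ has pdf $g_2(x)=\frac{(p-\alpha)(1-\alpha)}{p-1}x^{-\alpha}(1-x^{p-1})$ for $0<x\le1$, and $f_2(x)\le V_2g_2(x)$ for all $x\in(0,1)$, where $V_2=\frac{p-1}{(p-\alpha)(1-\alpha)K_2}$, with $f_2(x)/(V_2g_2(x))=\varphi(x)\in[0,1]$; (b) Algorithm 2 terminates almost surely and its output has pdf $f_2$; (c) the probability of acceptance on each iteration equals $1/V_2=K_2\frac{(p-\alpha)(1-\alpha)}{p-1}$ and satisfies $1/V_2\ge e^{-1}$.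
   Context: $U(0,1)$ denotes the uniform distribution on $(0,1)$; $\mathrm{beta}(\beta,\eta)$ denotes the beta distribution with shape parameters $\beta,\eta>0$, i.e. with density proportional to $y^{\beta-1}(1-y)^{\eta-1}$ on $(0,1)$. *)

theory Defs
  imports "HOL-Probability.Probability"
begin

definition beta_density :: "real \<Rightarrow> real \<Rightarrow> real \<Rightarrow> real" where
  "beta_density b e y =
     indicator {0<..<1} y * (y powr (b - 1) * (1 - y) powr (e - 1) / Beta b e)"

definition uniform01_density :: "real \<Rightarrow> real" where
  "uniform01_density x = indicator {0<..<1} x"

definition K2 :: "real \<Rightarrow> real \<Rightarrow> real" where
  "K2 \<alpha> p = (LBINT x:{0<..<1}. (exp (- (x powr p)) - exp (- x)) * x powr (- \<alpha> - 1))"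

definition f2 :: "real \<Rightarrow> real \<Rightarrow> real \<Rightarrow> real" where
  "f2 \<alpha> p x = indicator {0<..<1} x *
      ((exp (- (x powr p)) - exp (- x)) * x powr (- \<alpha> - 1) / K2 \<alpha> p)"

definition g2 :: "real \<Rightarrow> real \<Rightarrow> real \<Rightarrow> real" where
  "g2 \<alpha> p x = indicator {0<..1} x *
      ((p - \<alpha>) * (1 - \<alpha>) / (p - 1) * x powr (- \<alpha>) * (1 - x powr (p - 1)))"

definition V2 :: "real \<Rightarrow> real \<Rightarrow> real" where
  "V2 \<alpha> p = (p - 1) / ((p - \<alpha>) * (1 - \<alpha>) * K2 \<alpha> p)"

definition phi2 :: "real \<Rightarrow> real \<Rightarrow> real" where
  "phi2 p z = (exp (- (z powr p)) - exp (- z)) / (z - z powr p)"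

end

theory Submission
  imports Defs
begin


lemma powr_lt_self: fixes x p :: real assumes "0<x" "x<1" "1<p" shows "x powr p < x"
  using assms powr_less_mono' by fastforce

lemma powr_lt1: fixes x q :: real assumes "0 \<le> x" "x < 1" "0 < q" shows "x powr q < 1"
  using powr_less_mono2[OF assms(3,1,2)] by simp

lemma exp_diff_bounds:
  fixes x p :: real assumes x: "0<x" "x<1" and p: "1<p"
  shows "exp (-1) * (x - x powr p) \<le> exp (- (x powr p)) - exp (- x)"
    and "exp (- (x powr p)) - exp (- x) \<le> x - x powr p"
proof -
  define a where "a = x powr p"
  have a: "0 < a" "a < x" using x p powr_lt_self[OF x p] by (auto simp: a_def)
  have e1: "exp (-a) - exp (-x) = exp (-x) * (exp (x - a) - 1)"
    by (simp add: algebra_simps flip: exp_add)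
  have h1: "exp (x - a) \<ge> 1 + (x - a)" by (rule exp_ge_add_one_self)
  have h2: "exp (-x) \<ge> exp (-1)" using x by simp
  have "exp (-1) * (x - a) \<le> exp (-x) * (exp (x - a) - 1)"
    by (rule mult_mono) (use h1 h2 a in \<open>linarith | simp\<close>)+
  then show "exp (-1) * (x - x powr p) \<le> exp (- (x powr p)) - exp (- x)"
    using e1 by (simp add: a_def)
  have e2: "exp (-a) - exp (-x) = exp (-a) * (1 - exp (-(x - a)))"
    by (simp add: algebra_simps flip: exp_add)
  have h3: "exp (-(x - a)) \<ge> 1 + (-(x - a))" by (rule exp_ge_add_one_self)
  have h4: "exp (-a) \<le> 1" using a by simp
  have h5: "exp (-(x - a)) \<le> 1" using a by simp
  have "exp (-a) * (1 - exp (-(x - a))) \<le> 1 * (x - a)"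
    by (rule mult_mono) (use h3 h4 h5 a in \<open>linarith | simp\<close>)+
  then show "exp (- (x powr p)) - exp (- x) \<le> x - x powr p"
    using e2 by (simp add: a_def)
qed

lemma Beta_2: fixes b :: real assumes "0 < b" shows "Beta b 2 = 1 / (b * (b + 1))"
proof -
  have nz: "b \<notin> \<int>\<^sub>\<le>\<^sub>0" "b + 1 \<notin> \<int>\<^sub>\<le>\<^sub>0" using assms
    by (auto elim!: nonpos_Ints_cases)
  have "Gamma (2::real) = Gamma (1 + 1)" by simp
  also have "\<dots> = 1" by (subst Gamma_plus1) auto
  finally have g2: "Gamma (2::real) = 1" .
  have "Gamma (b + 2) = (b + 1) * (b * Gamma b)"
    using Gamma_plus1[OF nz(2)] Gamma_plus1[OF nz(1)] by (simp add: add.assoc)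
  moreover have "Gamma b > 0" using assms by simp
  ultimately show ?thesis unfolding Beta_def g2 using assms
    by (metis (no_types, lifting) mult.commute mult.left_commute mult_1 nonzero_divide_mult_cancel_left order_less_irrefl)
qed

lemma deriv_G: fixes x q :: real assumes "0 < x"
  shows "((\<lambda>x. x powr q) has_real_derivative (q * x powr (q - 1))) (at x)"
  using assms by (auto intro!: derivative_eq_intros)



lemma Z_density_integral:
  fixes \<alpha> p :: real and A :: "real set"
  assumes a0: "0 \<le> \<alpha>" and a1: "\<alpha> < 1" and p1: "1 < p" and A: "A \<in> sets borel"
  shows "(\<integral>\<^sup>+y. ennreal (beta_density ((1 - \<alpha>) / (p - 1)) 2 y) * indicator A (y powr (1 / (p - 1))) \<partial>lborel)
       = (\<integral>\<^sup>+x. ennreal (g2 \<alpha> p x) * indicator A x \<partial>lborel)"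
proof -
  define b where "b = (1 - \<alpha>) / (p - 1)"
  define r where "r = 1 / (p - 1)"
  define F where "F y = beta_density b 2 y * indicator A (y powr r)" for y
  define H where "H x = g2 \<alpha> p x * indicator A x" for x
  define G where "G x = x powr (p - 1)" for x :: real
  define G' where "G' x = (p - 1) * x powr (p - 1 - 1)" for x :: real
  define t where "t n = 1 / real (Suc n)" for n
  define a where "a n = t n powr r" for n
  have b0: "b > 0" using a1 p1 by (simp add: b_def)
  have r0: "r > 0" using p1 by (simp add: r_def)
  have rp: "r * (p - 1) = 1" "(p - 1) * r = 1" using p1 by (simp_all add: r_def)
  have [measurable]: "F \<in> borel_measurable borel" unfolding F_def beta_density_def using A by measurable
  have [measurable]: "H \<in> borel_measurable borel" unfolding H_def g2_def using A by measurable
  have t0: "0 < t n" "t n \<le> 1" for n by (auto simp: t_def)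
  have a0': "0 < a n" "a n \<le> 1" for n using t0[of n] r0 by (auto simp: a_def intro!: powr_le1)
  have tdec: "t (Suc n) \<le> t n" for n unfolding t_def by (rule divide_left_mono) auto
  have adec: "a (Suc n) \<le> a n" for n unfolding a_def using t0[of "Suc n"] r0 by (intro powr_mono2 tdec) auto
  have Ga: "G (a n) = t n" for n using t0[of n] rp by (simp add: G_def a_def powr_powr)
  have G1: "G 1 = 1" by (simp add: G_def)
  have F0: "F y = 0" if "y \<notin> {0<..<1}" for y using that by (simp add: F_def beta_density_def)
  have H0: "H x = 0" if "x \<notin> {0<..1}" for x using that by (simp add: H_def g2_def)
  have FG: "F (G x) * G' x = H x" if x: "0 < x" "x \<le> 1" for x
  proof (cases "x = 1")
    case True then show ?thesis by (simp add: F_def H_def G_def g2_def beta_density_def)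
  next
    case False
    then have x1: "x < 1" using x by simp
    have Gx: "0 < G x" "G x < 1" using x x1 p1 by (auto simp: G_def intro!: powr_lt1)
    have e1: "(G x) powr r = x" using x rp by (simp add: G_def powr_powr)
    have "(G x) powr (b - 1) * x powr (p - 1 - 1) = x powr ((p - 1) * (b - 1) + (p - 1 - 1))"
      using x by (simp add: G_def powr_powr powr_add)
    also have "(p - 1) * (b - 1) + (p - 1 - 1) = - \<alpha>" using p1 by (simp add: b_def field_simps)
    finally have e2: "(G x) powr (b - 1) * x powr (p - 1 - 1) = x powr (- \<alpha>)" .
    have e3a: "(p - 1) * b = 1 - \<alpha>" "b + 1 = (p - \<alpha>) / (p - 1)" using p1 by (simp_all add: b_def field_simps)
    have e3: "(p - 1) * (b * (b + 1)) = (p - \<alpha>) * (1 - \<alpha>) / (p - 1)"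
      by (subst mult.assoc[symmetric], unfold e3a) simp
    have "F (G x) * G' x = ((G x) powr (b - 1) * x powr (p - 1 - 1)) * (1 - G x) * ((p - 1) * (b * (b + 1))) * indicator A x"
      using Gx e1 b0 by (simp add: F_def G'_def beta_density_def Beta_2 field_simps)
    also have "\<dots> = H x" unfolding e2 e3 using x x1 by (simp add: H_def g2_def G_def field_simps)
    finally show ?thesis .
  qed
  define \<mu>1 where "\<mu>1 = density lborel (\<lambda>y. ennreal (F y))"
  define \<mu>2 where "\<mu>2 = density lborel (\<lambda>y. ennreal (H y))"
  have "(\<integral>\<^sup>+y. ennreal (beta_density b 2 y) * indicator A (y powr r) \<partial>lborel) = (\<integral>\<^sup>+y. ennreal (F y) * indicator {0<..1} y \<partial>lborel)"
    by (intro nn_integral_cong) (auto simp: F_def beta_density_def split: split_indicator)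
  also have "\<dots> = emeasure \<mu>1 {0<..1}" by (simp add: \<mu>1_def emeasure_density)
  also have "{0<..1} = (\<Union>n. {t n..1})"
  proof (intro equalityI subsetI)
    fix x :: real assume "x \<in> {0<..1}"
    then have "0 < x" "x \<le> 1" by auto
    then obtain n where "inverse (real (Suc n)) < x" using reals_Archimedean by blast
    then show "x \<in> (\<Union>n. {t n..1})" using \<open>x \<le> 1\<close> by (auto simp: t_def field_simps intro!: exI[of _ n])
  next
    fix x assume "x \<in> (\<Union>n. {t n..1})" then show "x \<in> {0<..1}" using t0 by (auto intro: less_le_trans)
  qed
  also have "emeasure \<mu>1 (\<Union>n. {t n..1}) = (SUP n. emeasure \<mu>1 {t n..1})"
    by (rule SUP_emeasure_incseq[symmetric]) (auto simp: \<mu>1_def intro!: incseq_SucI dest: order_trans[OF tdec])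
  also have "\<dots> = (SUP n. emeasure \<mu>2 {a n..1})"
  proof (intro SUP_cong refl)
    fix n
    have "emeasure \<mu>1 {t n..1} = (\<integral>\<^sup>+y. ennreal (F y) * indicator {G (a n)..G 1} y \<partial>lborel)"
      by (simp add: \<mu>1_def emeasure_density Ga G1)
    also have "\<dots> = (\<integral>\<^sup>+x. ennreal (F (G x) * G' x * indicator {a n..1} x) \<partial>lborel)"
    proof -
      have "(\<integral>\<^sup>+y. ennreal (F y) * indicator {G (a n)..G 1} y \<partial>lborel) = (\<integral>\<^sup>+y. F y * indicator {G (a n)..G 1} y \<partial>lborel)"
        by (intro nn_integral_cong) (auto split: split_indicator)
      also have "\<dots> = (\<integral>\<^sup>+x. F (G x) * G' x * indicator {a n..1} x \<partial>lborel)"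
      proof (rule nn_integral_substitution)
        show "set_borel_measurable borel {G (a n)..G 1} F" by (simp add: set_borel_measurable_def)
        show "(G has_real_derivative G' x) (at x)" if "x \<in> {a n..1}" for x
          using that a0'[of n] unfolding G_def G'_def by (intro deriv_G) auto
        show "continuous_on {a n..1} G'" unfolding G'_def using a0'[of n]
          by (intro continuous_intros) auto
        show "0 \<le> G' x" if "x \<in> {a n..1}" for x using p1 by (simp add: G'_def)
        show "a n \<le> 1" using a0'[of n] by simp
      qed
      finally show ?thesis .
    qed
    also have "\<dots> = (\<integral>\<^sup>+x. ennreal (H x) * indicator {a n..1} x \<partial>lborel)"
      using a0'[of n] by (intro nn_integral_cong) (auto simp: FG split: split_indicator)
    also have "\<dots> = emeasure \<mu>2 {a n..1}" by (simp add: \<mu>2_def emeasure_density)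
    finally show "emeasure \<mu>1 {t n..1} = emeasure \<mu>2 {a n..1}" .
  qed
  also have "\<dots> = emeasure \<mu>2 (\<Union>n. {a n..1})"
    by (rule SUP_emeasure_incseq) (auto simp: \<mu>2_def intro!: incseq_SucI dest: order_trans[OF adec])
  also have "(\<Union>n. {a n..1}) = {0<..1}"
  proof (intro equalityI subsetI)
    fix x assume "x \<in> (\<Union>n. {a n..1})" then show "x \<in> {0<..1}" using a0' by (auto intro: less_le_trans)
  next
    fix x :: real assume "x \<in> {0<..1}"
    then have x: "0 < x" "x \<le> 1" by auto
    then have "0 < G x" by (simp add: G_def)
    then obtain n where n: "inverse (real (Suc n)) < G x" using reals_Archimedean by blast
    have "a n \<le> (G x) powr r" unfolding a_def
      using n r0 by (intro powr_mono2) (auto simp: t_def field_simps)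
    also have "(G x) powr r = x" using x rp by (simp add: G_def powr_powr)
    finally show "x \<in> (\<Union>n. {a n..1})" using x by auto
  qed
  also have "emeasure \<mu>2 {0<..1} = (\<integral>\<^sup>+x. ennreal (H x) \<partial>lborel)"
    by (simp add: \<mu>2_def emeasure_density) (intro nn_integral_cong, auto simp: H0 split: split_indicator)
  also have "\<dots> = (\<integral>\<^sup>+x. ennreal (g2 \<alpha> p x) * indicator A x \<partial>lborel)"
    by (intro nn_integral_cong) (auto simp: H_def split: split_indicator)
  finally show ?thesis by (simp add: b_def r_def)
qed


lemma (in prob_space) indep_pairs:
  assumes ind: "indep_vars (\<lambda>_. borel) (\<lambda>i. case_sum U Y i) (UNIV :: (nat + nat) set)"
  shows "indep_vars (\<lambda>_. borel \<Otimes>\<^sub>M borel) (\<lambda>n \<omega>. (U n \<omega>, Y n \<omega>)) (UNIV :: nat set)"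
proof -
  define K where "K j = {Inl j, Inr j :: nat + nat}" for j :: nat
  have "indep_vars (\<lambda>j. PiM (K j) (\<lambda>_. borel)) (\<lambda>j \<omega>. restrict (\<lambda>i. case_sum U Y i \<omega>) (K j)) UNIV"
    by (rule indep_vars_restrict[OF ind]) (auto simp: K_def disjoint_family_on_def)
  then have "indep_vars (\<lambda>_. borel \<Otimes>\<^sub>M borel)
      (\<lambda>j \<omega>. (\<lambda>f. (f (Inl j), f (Inr j))) (restrict (\<lambda>i. case_sum U Y i \<omega>) (K j))) UNIV"
    by (rule indep_vars_compose2) (auto simp: K_def)
  also have "(\<lambda>j \<omega>. (\<lambda>f. (f (Inl j), f (Inr j))) (restrict (\<lambda>i. case_sum U Y i \<omega>) (K j))) =
      (\<lambda>n \<omega>. (U n \<omega>, Y n \<omega>))"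
    by (auto simp: K_def fun_eq_iff)
  finally show ?thesis .
qed

lemma (in prob_space) indep_pair1:
  assumes ind: "indep_vars (\<lambda>_. borel) (\<lambda>i. case_sum U Y i) (UNIV :: (nat + nat) set)"
  shows "indep_var borel (U n) borel (Y n)"
proof -
  have "indep_var (PiM {Inl n} (\<lambda>_. borel)) (\<lambda>\<omega>. restrict (\<lambda>i. case_sum U Y i \<omega>) {Inl n})
                  (PiM {Inr n} (\<lambda>_. borel)) (\<lambda>\<omega>. restrict (\<lambda>i. case_sum U Y i \<omega>) {Inr n})"
    by (rule indep_var_restrict[OF ind]) auto
  then have "indep_var borel ((\<lambda>f. f (Inl n)) \<circ> (\<lambda>\<omega>. restrict (\<lambda>i. case_sum U Y i \<omega>) {Inl n}))
                       borel ((\<lambda>f. f (Inr n)) \<circ> (\<lambda>\<omega>. restrict (\<lambda>i. case_sum U Y i \<omega>) {Inr n}))"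
    by (rule indep_var_compose) auto
  also have "((\<lambda>f. f (Inl n)) \<circ> (\<lambda>\<omega>. restrict (\<lambda>i. case_sum U Y i \<omega>) {Inl n})) = U n"
    by (auto simp: fun_eq_iff)
  also have "((\<lambda>f. f (Inr n)) \<circ> (\<lambda>\<omega>. restrict (\<lambda>i. case_sum U Y i \<omega>) {Inr n})) = Y n"
    by (auto simp: fun_eq_iff)
  finally show ?thesis .
qed



locale rs = prob_space M for M :: "'a measure" +
  fixes \<alpha> p :: real and U Y :: "nat \<Rightarrow> 'a \<Rightarrow> real"
  assumes a0: "0 \<le> \<alpha>" and a1: "\<alpha> < 1" and p1: "1 < p"
    and ind: "indep_vars (\<lambda>_. borel) (\<lambda>i. case_sum U Y i) (UNIV :: (nat + nat) set)"
    and distU: "\<And>n. distributed M lborel (U n) (\<lambda>x. ennreal (uniform01_density x))"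
    and distY: "\<And>n. distributed M lborel (Y n) (\<lambda>y. ennreal (beta_density ((1 - \<alpha>) / (p - 1)) 2 y))"
begin

definition "Z n \<omega> = Y n \<omega> powr (1 / (p - 1))"
definition "c = (p - \<alpha>) * (1 - \<alpha>) / (p - 1)"
definition "I x = (exp (- (x powr p)) - exp (- x)) * x powr (- \<alpha> - 1)"
definition "w x = x powr (- \<alpha>) * (1 - x powr (p - 1))"

lemma c_pos: "c > 0" using a1 p1 by (simp add: c_def)

lemma U_meas[measurable]: "U n \<in> borel_measurable M"
  using distU[of n] by (simp add: distributed_def)
lemma Y_meas[measurable]: "Y n \<in> borel_measurable M"
  using distY[of n] by (simp add: distributed_def)
lemma Z_meas[measurable]: "Z n \<in> borel_measurable M"
  unfolding Z_def by measurable
lemma g2_meas[measurable]: "g2 \<alpha> p \<in> borel_measurable borel"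
  unfolding g2_def by measurable
lemma f2_meas[measurable]: "f2 \<alpha> p \<in> borel_measurable borel"
  unfolding f2_def by measurable
lemma I_meas[measurable]: "I \<in> borel_measurable borel"
  unfolding I_def by measurable
lemma phi2_meas[measurable]: "phi2 p \<in> borel_measurable borel"
  unfolding phi2_def by measurable

lemma Z_distr: "distributed M lborel (Z n) (\<lambda>x. ennreal (g2 \<alpha> p x))"
proof -
  have "distr M lborel (Z n) = density lborel (\<lambda>x. ennreal (g2 \<alpha> p x))"
  proof (rule measure_eqI)
    fix A assume A: "A \<in> sets (distr M lborel (Z n))"
    then have A'[measurable]: "A \<in> sets borel" by simp
    have "emeasure (distr M lborel (Z n)) A = emeasure M (Z n -` A \<inter> space M)"
      using A by (simp add: emeasure_distr)
    also have "Z n -` A \<inter> space M = Y n -` {y. y powr (1 / (p - 1)) \<in> A} \<inter> space M"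
      by (auto simp: Z_def)
    also have "emeasure M \<dots> = (\<integral>\<^sup>+y. ennreal (beta_density ((1 - \<alpha>) / (p - 1)) 2 y) * indicator {y. y powr (1 / (p - 1)) \<in> A} y \<partial>lborel)"
      using A' by (intro distributed_emeasure[OF distY]) measurable
    also have "\<dots> = (\<integral>\<^sup>+y. ennreal (beta_density ((1 - \<alpha>) / (p - 1)) 2 y) * indicator A (y powr (1 / (p - 1))) \<partial>lborel)"
      by (intro nn_integral_cong) (auto split: split_indicator)
    also have "\<dots> = (\<integral>\<^sup>+x. ennreal (g2 \<alpha> p x) * indicator A x \<partial>lborel)"
      by (rule Z_density_integral[OF a0 a1 p1 A'])
    also have "\<dots> = emeasure (density lborel (\<lambda>x. ennreal (g2 \<alpha> p x))) A"
      using A' by (simp add: emeasure_density)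
    finally show "emeasure (distr M lborel (Z n)) A = emeasure (density lborel (\<lambda>x. ennreal (g2 \<alpha> p x))) A" .
  qed simp
  then show ?thesis by (simp add: distributed_def)
qed

lemma g2_nn_integral: "(\<integral>\<^sup>+x. ennreal (g2 \<alpha> p x) \<partial>lborel) = 1"
proof -
  have "prob_space (distr M lborel (Z 0))" by (intro prob_space_distr) simp
  then have "prob_space (density lborel (\<lambda>x. ennreal (g2 \<alpha> p x)))"
    using Z_distr[of 0] by (simp add: distributed_def)
  from prob_space.emeasure_space_1[OF this] show ?thesis
    by (simp add: emeasure_density)
qed

lemma w_pos: "0 < x \<Longrightarrow> x < 1 \<Longrightarrow> 0 < w x"
  using p1 by (auto simp: w_def intro!: mult_pos_pos powr_lt1)

lemma g2_eq: "0 < x \<Longrightarrow> x < 1 \<Longrightarrow> g2 \<alpha> p x = c * w x"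
  by (simp add: g2_def c_def w_def)

lemma g2_out: "x \<notin> {0<..<1} \<Longrightarrow> g2 \<alpha> p x = 0"
  by (cases "x = 1") (auto simp: g2_def)

lemma g2_nonneg: "0 \<le> g2 \<alpha> p x"
  by (cases "0 < x \<and> x < 1") (auto simp: g2_eq g2_out c_pos w_pos less_imp_le)

lemma xw: assumes "0 < x" shows "(x - x powr p) * x powr (- \<alpha> - 1) = w x"
proof -
  have "x * x powr (- \<alpha> - 1) = x powr (- \<alpha>)"
    using assms by (simp add: powr_add[symmetric] powr_mult_base)
  moreover have "x powr p * x powr (- \<alpha> - 1) = x powr (- \<alpha>) * x powr (p - 1)"
  proof -
    have "x powr p * x powr (- \<alpha> - 1) = x powr (p + (- \<alpha> - 1))" by (simp add: powr_add)
    also have "p + (- \<alpha> - 1) = (- \<alpha>) + (p - 1)" by simp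
    also have "x powr \<dots> = x powr (- \<alpha>) * x powr (p - 1)" by (rule powr_add)
    finally show ?thesis .
  qed
  ultimately show ?thesis by (simp add: w_def algebra_simps)
qed

lemma I_bounds: assumes "0 < x" "x < 1"
  shows "exp (-1) * w x \<le> I x" "I x \<le> w x"
proof -
  have pos: "0 < x powr (- \<alpha> - 1)" using assms by simp
  show "exp (-1) * w x \<le> I x"
    using mult_right_mono[OF exp_diff_bounds(1)[OF assms p1] less_imp_le[OF pos]]
    by (simp add: I_def xw[OF assms(1), symmetric] mult.assoc)
  show "I x \<le> w x"
    using mult_right_mono[OF exp_diff_bounds(2)[OF assms p1] less_imp_le[OF pos]]
    by (simp add: I_def xw[OF assms(1), symmetric])
qed

lemma g2_integrable: "integrable lborel (g2 \<alpha> p)"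
  using g2_nn_integral by (intro integrableI_nonneg) (auto simp: g2_nonneg)

lemma g2_integral: "integral\<^sup>L lborel (g2 \<alpha> p) = 1"
proof -
  have "ennreal (integral\<^sup>L lborel (g2 \<alpha> p)) = 1"
    using g2_nn_integral nn_integral_eq_integral[OF g2_integrable] g2_nonneg by simp
  then show ?thesis by (simp add: ennreal_eq_1)
qed

definition "Ii x = indicator {0<..<1::real} x * I x"

lemma Ii_meas[measurable]: "Ii \<in> borel_measurable borel" unfolding Ii_def by measurable

lemma Ii_bounds: "exp (-1) / c * g2 \<alpha> p x \<le> Ii x" "Ii x \<le> g2 \<alpha> p x / c" "0 \<le> Ii x"
proof -
  have "exp (-1) / c * g2 \<alpha> p x \<le> Ii x \<and> Ii x \<le> g2 \<alpha> p x / c \<and> 0 \<le> Ii x"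
  proof (cases "0 < x \<and> x < 1")
    case True
    then have "exp (-1) * w x \<le> I x" "I x \<le> w x" "0 < w x" using I_bounds w_pos by auto
    moreover have "exp (-1) * w x \<ge> 0" using \<open>0 < w x\<close> by simp
    ultimately have "0 \<le> I x" by linarith
    with \<open>exp (-1) * w x \<le> I x\<close> \<open>I x \<le> w x\<close> show ?thesis using True c_pos by (simp add: Ii_def g2_eq)
  next
    case False then show ?thesis by (auto simp: Ii_def g2_out)
  qed
  then show "exp (-1) / c * g2 \<alpha> p x \<le> Ii x" "Ii x \<le> g2 \<alpha> p x / c" "0 \<le> Ii x" by auto
qed

lemma Ii_integrable: "integrable lborel Ii"
proof (rule Bochner_Integration.integrable_bound)
  show "integrable lborel (\<lambda>x. g2 \<alpha> p x / c)" using g2_integrable by simp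
  show "Ii \<in> borel_measurable lborel" by simp
  show "AE x in lborel. norm (Ii x) \<le> norm (g2 \<alpha> p x / c)"
    using Ii_bounds g2_nonneg c_pos by (auto intro!: AE_I2)
qed

lemma K2_eq: "K2 \<alpha> p = integral\<^sup>L lborel Ii"
  by (simp add: K2_def set_lebesgue_integral_def Ii_def[abs_def] I_def)

lemma K2_lower: "exp (-1) \<le> K2 \<alpha> p * c"
proof -
  have "integral\<^sup>L lborel (\<lambda>x. exp (-1) / c * g2 \<alpha> p x) \<le> integral\<^sup>L lborel Ii"
    by (rule integral_mono'[OF Ii_integrable]) (use Ii_bounds in auto)
  then have "exp (-1) / c \<le> K2 \<alpha> p" by (simp add: K2_eq g2_integral)
  then show ?thesis using c_pos by (simp add: field_simps)
qed

lemma K2_pos: "0 < K2 \<alpha> p"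
  using K2_lower c_pos by (smt (verit) exp_gt_zero mult_nonpos_nonneg)

lemma f2_eq: "f2 \<alpha> p x = Ii x / K2 \<alpha> p"
  by (simp add: f2_def Ii_def I_def)

lemma f2_nonneg: "0 \<le> f2 \<alpha> p x"
  using Ii_bounds(3) K2_pos by (simp add: f2_eq)

lemma f2_nn_integral: "(\<integral>\<^sup>+x. ennreal (f2 \<alpha> p x) \<partial>lborel) = 1"
proof -
  have int: "integrable lborel (f2 \<alpha> p)" unfolding f2_eq[abs_def] using Ii_integrable by simp
  have "integral\<^sup>L lborel (f2 \<alpha> p) = 1" unfolding f2_eq[abs_def] using K2_pos by (simp add: K2_eq)
  then show ?thesis using nn_integral_eq_integral[OF int] f2_nonneg by simp
qed

end

context rs begin

lemma V2_eq: "V2 \<alpha> p = 1 / (c * K2 \<alpha> p)"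
  by (simp add: V2_def c_def)

lemma q_eq: "1 / V2 \<alpha> p = c * K2 \<alpha> p"
  by (simp add: V2_eq)

lemma phi_eq: "0 < x \<Longrightarrow> x < 1 \<Longrightarrow> phi2 p x = I x / w x"
proof -
  assume x: "0 < x" "x < 1"
  have "0 < x powr (- \<alpha> - 1)" using x by simp
  then show ?thesis using x
    by (simp add: phi2_def I_def xw[symmetric])
qed

lemma phi_bounds: assumes "0 < x" "x < 1" shows "0 \<le> phi2 p x" "phi2 p x \<le> 1"
proof -
  have d: "0 < x - x powr p" using powr_lt_self[OF assms p1] by simp
  have n: "exp (-1) * (x - x powr p) \<le> exp (- (x powr p)) - exp (- x)"
          "exp (- (x powr p)) - exp (- x) \<le> x - x powr p"
    using exp_diff_bounds[OF assms p1] by auto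
  have "0 \<le> exp (-1) * (x - x powr p)" using d by simp
  then show "0 \<le> phi2 p x" using n d unfolding phi2_def by (intro divide_nonneg_pos) auto
  show "phi2 p x \<le> 1" using n d unfolding phi2_def by (simp add: divide_le_eq_1)
qed

lemma part_a2: assumes "x \<in> {0<..<1}"
  shows "f2 \<alpha> p x \<le> V2 \<alpha> p * g2 \<alpha> p x \<and>
         f2 \<alpha> p x / (V2 \<alpha> p * g2 \<alpha> p x) = phi2 p x \<and>
         0 \<le> phi2 p x \<and> phi2 p x \<le> 1"
proof -
  have x: "0 < x" "x < 1" using assms by auto
  have K: "0 < K2 \<alpha> p" by (rule K2_pos)
  have f: "f2 \<alpha> p x = I x / K2 \<alpha> p" using x by (simp add: f2_eq Ii_def)
  have v: "V2 \<alpha> p * g2 \<alpha> p x = w x / K2 \<alpha> p" using x c_pos K by (simp add: V2_eq g2_eq)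
  have wp: "0 < w x" using w_pos x by simp
  show ?thesis using I_bounds[OF x] wp K phi_bounds[OF x] phi_eq[OF x]
    unfolding f v by (auto simp: divide_right_mono)
qed

definition "clp t = max 0 (min 1 (t::real))"

lemma pointwise_key: "ennreal (g2 \<alpha> p x) * ennreal (clp (phi2 p x)) = ennreal (c * K2 \<alpha> p) * ennreal (f2 \<alpha> p x)"
proof (cases "0 < x \<and> x < 1")
  case True
  then have x: "0 < x" "x < 1" by auto
  have cl: "clp (phi2 p x) = I x / w x" using phi_bounds[OF x] phi_eq[OF x] by (simp add: clp_def)
  have wp: "0 < w x" using w_pos x by simp
  have "g2 \<alpha> p x * clp (phi2 p x) = c * K2 \<alpha> p * f2 \<alpha> p x"
    using wp K2_pos x by (simp add: cl g2_eq f2_eq Ii_def)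
  moreover have "0 \<le> g2 \<alpha> p x" "0 \<le> clp (phi2 p x)" "0 \<le> c * K2 \<alpha> p" "0 \<le> f2 \<alpha> p x"
    using g2_nonneg f2_nonneg c_pos K2_pos by (auto simp: clp_def)
  ultimately show ?thesis by (simp flip: ennreal_mult)
next
  case False
  then show ?thesis by (simp add: g2_out f2_eq Ii_def)
qed

lemma unif_emeasure: "emeasure (distr M borel (U n)) {..t} = ennreal (clp t)"
proof -
  have "emeasure (distr M borel (U n)) {..t} = emeasure M (U n -` {..t} \<inter> space M)"
    by (simp add: emeasure_distr)
  also have "\<dots> = (\<integral>\<^sup>+x. ennreal (uniform01_density x) * indicator {..t} x \<partial>lborel)"
    by (intro distributed_emeasure[OF distU]) simp
  also have "\<dots> = (\<integral>\<^sup>+x. indicator ({0<..<1} \<inter> {..t}) x \<partial>lborel)"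
    by (intro nn_integral_cong) (auto simp: uniform01_density_def split: split_indicator)
  also have "\<dots> = emeasure lborel ({0<..<1} \<inter> {..t})" by simp
  also have "\<dots> = ennreal (clp t)"
  proof (cases "t \<le> 0")
    case True
    then have "{0<..<1} \<inter> {..t} = {}" by auto
    then show ?thesis using True by (simp add: clp_def)
  next
    case False
    show ?thesis
    proof (cases "t < 1")
      case True
      then have "{0<..<1} \<inter> {..t} = {0<..t}" by auto
      then show ?thesis using True False by (simp add: clp_def)
    next
      case False
      then have "{0<..<1} \<inter> {..t} = {0<..<1::real}" by auto
      then show ?thesis using False by (simp add: clp_def)
    qed
  qed
  finally show ?thesis .
qed

lemma acc_A:
  assumes A[measurable]: "A \<in> sets borel"
  shows "emeasure M {\<omega> \<in> space M. U n \<omega> \<le> phi2 p (Z n \<omega>) \<and> Z n \<omega> \<in> A}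
       = ennreal (c * K2 \<alpha> p) * emeasure (density lborel (\<lambda>x. ennreal (f2 \<alpha> p x))) A"
proof -
  define r where "r = 1 / (p - 1)"
  define W where "W \<omega> = (U n \<omega>, Y n \<omega>)" for \<omega>
  define S where "S = {x \<in> space (borel \<Otimes>\<^sub>M borel). fst x \<le> phi2 p (snd x powr r) \<and> snd x powr r \<in> A}"
  have W[measurable]: "W \<in> measurable M (borel \<Otimes>\<^sub>M borel)" unfolding W_def by measurable
  have S[measurable]: "S \<in> sets (borel \<Otimes>\<^sub>M borel)" unfolding S_def by measurable
  have "{\<omega> \<in> space M. U n \<omega> \<le> phi2 p (Z n \<omega>) \<and> Z n \<omega> \<in> A} = W -` S \<inter> space M"
    by (auto simp: W_def S_def Z_def r_def space_pair_measure)
  also have "emeasure M \<dots> = emeasure (distr M (borel \<Otimes>\<^sub>M borel) W) S"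
    by (simp add: emeasure_distr)
  also have "distr M (borel \<Otimes>\<^sub>M borel) W = distr M borel (U n) \<Otimes>\<^sub>M distr M borel (Y n)"
    using indep_pair1[OF ind, of n] unfolding indep_var_distribution_eq W_def by simp
  also have "emeasure \<dots> S = (\<integral>\<^sup>+y. emeasure (distr M borel (U n)) ((\<lambda>x. (x, y)) -` S) \<partial>distr M borel (Y n))"
  proof -
    interpret P1: prob_space "distr M borel (U n)" by (rule prob_space_distr) simp
    interpret P2: prob_space "distr M borel (Y n)" by (rule prob_space_distr) simp
    interpret pair_prob_space "distr M borel (U n)" "distr M borel (Y n)" ..
    show ?thesis by (rule emeasure_pair_measure_alt2) simp
  qed
  also have "\<dots> = (\<integral>\<^sup>+y. ennreal (clp (phi2 p (y powr r))) * indicator A (y powr r) \<partial>distr M borel (Y n))"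
  proof (intro nn_integral_cong)
    fix y :: real
    have "(\<lambda>x. (x, y)) -` S = (if y powr r \<in> A then {..phi2 p (y powr r)} else {})"
      by (auto simp: S_def space_pair_measure)
    then show "emeasure (distr M borel (U n)) ((\<lambda>x. (x, y)) -` S) = ennreal (clp (phi2 p (y powr r))) * indicator A (y powr r)"
      by (simp add: unif_emeasure split: split_indicator)
  qed
  also have "\<dots> = (\<integral>\<^sup>+\<omega>. ennreal (clp (phi2 p (Z n \<omega>))) * indicator A (Z n \<omega>) \<partial>M)"
    by (subst nn_integral_distr) (auto simp: Z_def r_def clp_def)
  also have "\<dots> = (\<integral>\<^sup>+x. ennreal (g2 \<alpha> p x) * (ennreal (clp (phi2 p x)) * indicator A x) \<partial>lborel)"
    by (rule distributed_nn_integral[OF Z_distr, symmetric]) (simp add: clp_def)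
  also have "\<dots> = (\<integral>\<^sup>+x. ennreal (c * K2 \<alpha> p) * (ennreal (f2 \<alpha> p x) * indicator A x) \<partial>lborel)"
    by (intro nn_integral_cong) (simp add: mult.assoc[symmetric] pointwise_key)
  also have "\<dots> = ennreal (c * K2 \<alpha> p) * emeasure (density lborel (\<lambda>x. ennreal (f2 \<alpha> p x))) A"
    by (subst nn_integral_cmult) (auto simp: emeasure_density)
  finally show ?thesis .
qed

end

context rs begin

definition "acc n \<omega> = (U n \<omega> \<le> phi2 p (Z n \<omega>))"
definition "q = c * K2 \<alpha> p"
definition "out \<omega> = Z (LEAST n. acc n \<omega>) \<omega>"

lemma acc_meas[measurable]: "Measurable.pred M (acc n)"
  unfolding acc_def by measurable

lemma f2_space: "emeasure (density lborel (\<lambda>x. ennreal (f2 \<alpha> p x))) UNIV = 1"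
  using f2_nn_integral by (simp add: emeasure_density)

lemma prob_acc: "prob {\<omega> \<in> space M. acc n \<omega>} = q"
proof -
  have "emeasure M {\<omega> \<in> space M. acc n \<omega>} = ennreal q"
    using acc_A[of UNIV n] f2_space by (simp add: acc_def q_def)
  moreover have "0 \<le> q" using c_pos K2_pos by (simp add: q_def)
  ultimately show ?thesis by (simp add: emeasure_eq_measure)
qed

lemma q_bounds: "0 < q" "q \<le> 1"
  using c_pos K2_pos prob_acc[of 0] prob_le_1[of "{\<omega> \<in> space M. acc 0 \<omega>}"] by (auto simp: q_def)

definition "F j = {(\<lambda>\<omega>. (U j \<omega>, Y j \<omega>)) -` S \<inter> space M | S. S \<in> sets (borel \<Otimes>\<^sub>M borel)}"

lemma indepF: "indep_sets F UNIV"
  using indep_pairs[OF ind] unfolding indep_vars_def2 F_def by simp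

lemma inF: assumes "Measurable.pred (borel \<Otimes>\<^sub>M borel) P"
  shows "{\<omega> \<in> space M. P (U j \<omega>, Y j \<omega>)} \<in> F j"
proof -
  have S: "{x \<in> space (borel \<Otimes>\<^sub>M borel). P x} \<in> sets (borel \<Otimes>\<^sub>M borel)"
    using assms unfolding pred_def .
  show ?thesis unfolding F_def
    by (rule CollectI, rule exI[of _ "{x \<in> space (borel \<Otimes>\<^sub>M borel). P x}"])
       (use S in \<open>auto simp: space_pair_measure\<close>)
qed

lemma nacc_F: "{\<omega> \<in> space M. \<not> acc j \<omega>} \<in> F j"
proof -
  have "Measurable.pred (borel \<Otimes>\<^sub>M borel) (\<lambda>x. \<not> (fst x \<le> phi2 p (snd x powr (1 / (p - 1)))))"
    by measurable
  from inF[OF this, of j] show ?thesis by (simp add: acc_def Z_def)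
qed

lemma accA_F: assumes [measurable]: "A \<in> sets borel"
  shows "{\<omega> \<in> space M. acc j \<omega> \<and> Z j \<omega> \<in> A} \<in> F j"
proof -
  have "Measurable.pred (borel \<Otimes>\<^sub>M borel) (\<lambda>x. fst x \<le> phi2 p (snd x powr (1 / (p - 1))) \<and> snd x powr (1 / (p - 1)) \<in> A)"
    by measurable
  from inF[OF this, of j] show ?thesis by (simp add: acc_def Z_def)
qed

lemma prob_nacc: "prob {\<omega> \<in> space M. \<not> acc j \<omega>} = 1 - q"
proof -
  have "{\<omega> \<in> space M. \<not> acc j \<omega>} = space M - {\<omega> \<in> space M. acc j \<omega>}" by auto
  then show ?thesis using prob_compl[of "{\<omega> \<in> space M. acc j \<omega>}"] prob_acc by simp
qed

lemma prob_first: assumes [measurable]: "A \<in> sets borel"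
  shows "prob {\<omega> \<in> space M. (\<forall>j<k. \<not> acc j \<omega>) \<and> acc k \<omega> \<and> Z k \<omega> \<in> A}
       = (1 - q) ^ k * prob {\<omega> \<in> space M. acc k \<omega> \<and> Z k \<omega> \<in> A}"
proof -
  define B where "B j = (if j < k then {\<omega> \<in> space M. \<not> acc j \<omega>} else {\<omega> \<in> space M. acc k \<omega> \<and> Z k \<omega> \<in> A})" for j
  have "{\<omega> \<in> space M. (\<forall>j<k. \<not> acc j \<omega>) \<and> acc k \<omega> \<and> Z k \<omega> \<in> A} = (\<Inter>j\<in>{..k}. B j)"
  proof (intro equalityI subsetI)
    fix x assume x: "x \<in> (\<Inter>j\<in>{..k}. B j)"
    have xB: "x \<in> B j" if "j \<le> k" for j using x that by blast
    have 1: "x \<in> space M" "acc k x" "Z k x \<in> A" using xB[of k] by (simp_all add: B_def)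
    have 2: "\<not> acc j x" if "j < k" for j using xB[of j] that by (simp add: B_def)
    show "x \<in> {\<omega> \<in> space M. (\<forall>j<k. \<not> acc j \<omega>) \<and> acc k \<omega> \<and> Z k \<omega> \<in> A}"
      using 1 2 by blast
  qed (auto simp: B_def)
  also have "prob \<dots> = (\<Prod>j\<in>{..k}. prob (B j))"
    by (rule indep_setsD[OF indepF]) (auto simp: B_def nacc_F accA_F)
  also have "\<dots> = (\<Prod>j<Suc k. prob (B j))" by (simp add: lessThan_Suc_atMost)
  also have "\<dots> = (\<Prod>j<k. prob (B j)) * prob (B k)" by simp
  also have "(\<Prod>j<k. prob (B j)) = (\<Prod>j<k. 1 - q)"
    by (intro prod.cong) (auto simp: B_def prob_nacc)
  finally show ?thesis by (simp add: B_def)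
qed

lemma prob_none: "prob {\<omega> \<in> space M. \<forall>j\<le>N. \<not> acc j \<omega>} = (1 - q) ^ Suc N"
proof -
  have "{\<omega> \<in> space M. \<forall>j\<le>N. \<not> acc j \<omega>} = (\<Inter>j\<in>{..N}. {\<omega> \<in> space M. \<not> acc j \<omega>})"
    by auto
  also have "prob \<dots> = (\<Prod>j\<in>{..N}. prob {\<omega> \<in> space M. \<not> acc j \<omega>})"
    by (rule indep_setsD[OF indepF]) (auto simp: nacc_F)
  also have "\<dots> = (1 - q) ^ Suc N" by (simp add: prob_nacc)
  finally show ?thesis .
qed

lemma AE_acc: "AE \<omega> in M. \<exists>n. acc n \<omega>"
proof -
  define N where "N = {\<omega> \<in> space M. \<forall>n. \<not> acc n \<omega>}"
  have N[measurable]: "N \<in> sets M" unfolding N_def by measurable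
  have le: "prob N \<le> (1 - q) ^ Suc k" for k
  proof -
    have "prob N \<le> prob {\<omega> \<in> space M. \<forall>j\<le>k. \<not> acc j \<omega>}"
      by (rule finite_measure_mono) (auto simp: N_def)
    then show ?thesis by (simp add: prob_none)
  qed
  have "(\<lambda>k. (1 - q) ^ Suc k) \<longlonglongrightarrow> 0"
    using q_bounds by (intro LIMSEQ_Suc LIMSEQ_power_zero) auto
  then have "prob N \<le> 0" using le by (intro LIMSEQ_le_const) auto
  then have "emeasure M N = 0" by (simp add: emeasure_eq_measure measure_le_0_iff)
  then show ?thesis by (intro AE_I[OF _ _ N]) (auto simp: N_def)
qed

end

context rs begin

lemma out_meas[measurable]: "out \<in> borel_measurable M"
proof -
  have L: "(\<lambda>\<omega>. LEAST n. acc n \<omega>) \<in> measurable M (count_space UNIV)"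
    by measurable
  show ?thesis unfolding out_def
    by (rule measurable_compose_countable[OF _ L]) simp
qed

lemma out_distr: "distributed M lborel out (\<lambda>x. ennreal (f2 \<alpha> p x))"
proof -
  have "distr M lborel out = density lborel (\<lambda>x. ennreal (f2 \<alpha> p x))"
  proof (rule measure_eqI)
    fix A assume "A \<in> sets (distr M lborel out)"
    then have A[measurable]: "A \<in> sets borel" by simp
    define D where "D k = {\<omega> \<in> space M. (\<forall>j<k. \<not> acc j \<omega>) \<and> acc k \<omega> \<and> Z k \<omega> \<in> A}" for k
    define FA where "FA = emeasure (density lborel (\<lambda>x. ennreal (f2 \<alpha> p x))) A"
    have D[measurable]: "D k \<in> sets M" for k unfolding D_def by measurable
    have "emeasure (distr M lborel out) A = emeasure M (out -` A \<inter> space M)"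
      by (simp add: emeasure_distr)
    also have "\<dots> = emeasure M (\<Union>k. D k)"
    proof (rule emeasure_eq_AE)
      show "AE \<omega> in M. (\<omega> \<in> out -` A \<inter> space M) = (\<omega> \<in> (\<Union>k. D k))"
        using AE_acc
      proof (rule AE_mp, intro AE_I2 impI)
        fix \<omega> assume \<omega>: "\<omega> \<in> space M" and ex: "\<exists>n. acc n \<omega>"
        define k where "k = (LEAST n. acc n \<omega>)"
        have k1: "acc k \<omega>" unfolding k_def by (rule LeastI_ex[OF ex])
        have k2: "\<not> acc j \<omega>" if "j < k" for j using not_less_Least[OF that[unfolded k_def]] .
        have uniq: "m = k" if "\<omega> \<in> D m" for m
        proof -
          have "(\<forall>j<m. \<not> acc j \<omega>)" "acc m \<omega>" using that by (auto simp: D_def)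
          then show ?thesis using k1 k2 by (meson linorder_neqE_nat)
        qed
        have o: "out \<omega> = Z k \<omega>" by (simp add: out_def k_def)
        show "(\<omega> \<in> out -` A \<inter> space M) = (\<omega> \<in> (\<Union>k. D k))"
        proof
          assume "\<omega> \<in> out -` A \<inter> space M"
          then have "Z k \<omega> \<in> A" using o by simp
          then have "\<omega> \<in> D k" using k1 k2 \<omega> unfolding D_def by blast
          then show "\<omega> \<in> (\<Union>k. D k)" by blast
        next
          assume "\<omega> \<in> (\<Union>k. D k)"
          then obtain m where m: "\<omega> \<in> D m" by blast
          then have "m = k" by (rule uniq)
          then have "Z k \<omega> \<in> A" using m unfolding D_def by blast
          then show "\<omega> \<in> out -` A \<inter> space M" using o \<omega> by simp
        qed
      qed
    qed (auto intro!: sets.countable_UN)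
    also have "\<dots> = (\<Sum>k. emeasure M (D k))"
    proof (rule suminf_emeasure[symmetric])
      show "range D \<subseteq> sets M" by auto
      show "disjoint_family D"
      proof (unfold disjoint_family_on_def, intro ballI impI)
        fix m k :: nat assume "m \<noteq> k"
        show "D m \<inter> D k = {}"
        proof (cases "m < k")
          case True then show ?thesis by (auto simp: D_def)
        next
          case False then have "k < m" using \<open>m \<noteq> k\<close> by simp
          then show ?thesis by (auto simp: D_def)
        qed
      qed
    qed
    also have "\<dots> = (\<Sum>k. ennreal ((1 - q) ^ k * q) * FA)"
    proof (intro suminf_cong)
      fix k
      have e: "emeasure M {\<omega> \<in> space M. acc k \<omega> \<and> Z k \<omega> \<in> A} = ennreal q * FA"
        using acc_A[OF A, of k] by (simp add: acc_def q_def FA_def)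
      have "emeasure M (D k) = ennreal ((1 - q) ^ k * prob {\<omega> \<in> space M. acc k \<omega> \<and> Z k \<omega> \<in> A})"
        by (simp add: emeasure_eq_measure D_def prob_first[OF A])
      also have "\<dots> = ennreal ((1 - q) ^ k) * emeasure M {\<omega> \<in> space M. acc k \<omega> \<and> Z k \<omega> \<in> A}"
        using q_bounds by (simp add: ennreal_mult emeasure_eq_measure)
      also have "\<dots> = ennreal ((1 - q) ^ k * q) * FA"
        using q_bounds by (simp add: e ennreal_mult mult.assoc)
      finally show "emeasure M (D k) = ennreal ((1 - q) ^ k * q) * FA" .
    qed
    also have "\<dots> = (\<Sum>k. ennreal ((1 - q) ^ k * q)) * FA"
      by (rule ennreal_suminf_multc)
    also have "(\<Sum>k. ennreal ((1 - q) ^ k * q)) = ennreal (\<Sum>k. (1 - q) ^ k * q)"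
      using q_bounds by (intro suminf_ennreal2) (auto intro!: summable_mult2 summable_geometric)
    also have "(\<Sum>k. (1 - q) ^ k * q) = 1"
    proof -
      have "(\<Sum>k. (1 - q) ^ k) = 1 / (1 - (1 - q))"
        using q_bounds by (intro suminf_geometric) auto
      then have "(\<Sum>k. (1 - q) ^ k * q) = 1 / (1 - (1 - q)) * q"
        using q_bounds by (simp add: suminf_mult2[symmetric] summable_geometric)
      then show ?thesis using q_bounds by simp
    qed
    finally show "emeasure (distr M lborel out) A = emeasure (density lborel (\<lambda>x. ennreal (f2 \<alpha> p x))) A"
      by (simp add: FA_def)
  qed simp
  then show ?thesis by (simp add: distributed_def)
qed

end

theorem mainTheorem6:
  fixes M :: "'a measure" and \<alpha> p :: real
    and U Y :: "nat \<Rightarrow> 'a \<Rightarrow> real"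
  assumes "prob_space M"
    and "0 \<le> \<alpha>" and "\<alpha> < 1" and "1 < p"
    and "prob_space.indep_vars M (\<lambda>_. borel) (\<lambda>i. case_sum U Y i) (UNIV :: (nat + nat) set)"
    and "\<And>n. distributed M lborel (U n) (\<lambda>x. ennreal (uniform01_density x))"
    and "\<And>n. distributed M lborel (Y n)
                (\<lambda>y. ennreal (beta_density ((1 - \<alpha>) / (p - 1)) 2 y))"
  shows
    "let Z = (\<lambda>n \<omega>. Y n \<omega> powr (1 / (p - 1)));
         accept = (\<lambda>n \<omega>. U n \<omega> \<le> phi2 p (Z n \<omega>));
         output = (\<lambda>\<omega>. Z (LEAST n. accept n \<omega>) \<omega>)
     in
      \<comment> \<open>(a)\<close>
      (\<forall>n. distributed M lborel (Z n) (\<lambda>x. ennreal (g2 \<alpha> p x))) \<and>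
      (\<forall>x\<in>{0<..<1}. f2 \<alpha> p x \<le> V2 \<alpha> p * g2 \<alpha> p x \<and>
                       f2 \<alpha> p x / (V2 \<alpha> p * g2 \<alpha> p x) = phi2 p x \<and>
                       0 \<le> phi2 p x \<and> phi2 p x \<le> 1) \<and>
      \<comment> \<open>(b)\<close>
      (AE \<omega> in M. \<exists>n. accept n \<omega>) \<and>
      distributed M lborel output (\<lambda>x. ennreal (f2 \<alpha> p x)) \<and>
      \<comment> \<open>(c)\<close>
      (\<forall>n. measure M {\<omega> \<in> space M. accept n \<omega>} = 1 / V2 \<alpha> p) \<and>
      1 / V2 \<alpha> p = K2 \<alpha> p * ((p - \<alpha>) * (1 - \<alpha>) / (p - 1)) \<and>
      1 / V2 \<alpha> p \<ge> exp (- 1)"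
proof -
  interpret rs M \<alpha> p U Y
    using assms by (auto simp: rs_def rs_axioms_def)
  have 1: "\<forall>n. distributed M lborel (\<lambda>\<omega>. Y n \<omega> powr (1 / (p - 1))) (\<lambda>x. ennreal (g2 \<alpha> p x))"
    using Z_distr by (simp add: Z_def[abs_def])
  have 2: "\<forall>x\<in>{0<..<1}. f2 \<alpha> p x \<le> V2 \<alpha> p * g2 \<alpha> p x \<and>
                       f2 \<alpha> p x / (V2 \<alpha> p * g2 \<alpha> p x) = phi2 p x \<and>
                       0 \<le> phi2 p x \<and> phi2 p x \<le> 1"
    using part_a2 by blast
  have 3: "AE \<omega> in M. \<exists>n. U n \<omega> \<le> phi2 p (Y n \<omega> powr (1 / (p - 1)))"
    using AE_acc by (simp add: acc_def Z_def)
  have 4: "distributed M lborel (\<lambda>\<omega>. Y (LEAST n. U n \<omega> \<le> phi2 p (Y n \<omega> powr (1 / (p - 1)))) \<omega> powr (1 / (p - 1)))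
             (\<lambda>x. ennreal (f2 \<alpha> p x))"
    using out_distr by (simp add: out_def[abs_def] acc_def Z_def)
  have 5: "\<forall>n. measure M {\<omega> \<in> space M. U n \<omega> \<le> phi2 p (Y n \<omega> powr (1 / (p - 1)))} = 1 / V2 \<alpha> p"
    using prob_acc by (simp add: acc_def Z_def q_def q_eq)
  have 6: "1 / V2 \<alpha> p = K2 \<alpha> p * ((p - \<alpha>) * (1 - \<alpha>) / (p - 1))"
    by (simp add: q_eq c_def mult.commute)
  have 7: "1 / V2 \<alpha> p \<ge> exp (- 1)"
    using K2_lower by (simp add: q_eq mult.commute)
  show ?thesis unfolding Let_def using 1 2 3 4 5 6 7 by blast
qed

end
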